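(* The full subcategory $\mathbf{Eph}_n$ of ephemeral modules is a Serre subcategory of the category $\mathbf{Pers}_n$ of $n$-parameter persistence modules: for every short exact sequence $0\to V'\to V\to V''\to0$ in $\mathbf{Pers}_n$, the module $V$ is ephemeral if and only if both $V'$ and $V''$ are ephemeral.
   Context: Fix a field $\mathbb{k}$. $\mathbf{Pers}_n$ is the (Abelian) category of functors $V:\mathbf{R}^n\to\mathbf{Vect}_{\mathbb{k}}$, where $\mathbf{R}^n$ carries the componentwise order; $V_{s,t}$ denotes structure maps. A module $V$ is ephemeral if $V_{s-\varepsilon,s}=0$ for all $s\in\mathbb{R}^n$ and $\varepsilon>0$, where $s-\varepsilon$ subtracts $\varepsilon$ from each coordinate. *)

theory Defs
  imports "HOL-Analysis.Analysis"
begin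

definition cw_le :: "real^'n \<Rightarrow> real^'n \<Rightarrow> bool" where
  "cw_le s t \<longleftrightarrow> (\<forall>i. s $ i \<le> t $ i)"

definition shift_down :: "real^'n \<Rightarrow> real \<Rightarrow> real^'n" where
  "shift_down s eps = (\<chi> i. s $ i - eps)"

definition lin_on ::
  "('k \<Rightarrow> 'a::ab_group_add \<Rightarrow> 'a) \<Rightarrow> ('k \<Rightarrow> 'b \<Rightarrow> 'b) \<Rightarrow> 'a set \<Rightarrow> 'b set \<Rightarrow> ('a \<Rightarrow> 'b::ab_group_add) \<Rightarrow> bool" where
  "lin_on sa sb A B g \<longleftrightarrow>
     (\<forall>x\<in>A. g x \<in> B) \<and>
     (\<forall>x\<in>A. \<forall>y\<in>A. g (x + y) = g x + g y) \<and>
     (\<forall>c. \<forall>x\<in>A. g (sa c x) = sb c (g x))"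

text \<open>Each V_s is a k-vector space, realised as a subspace
  of an ambient k-vector space 'v; F s t is the structure map V_{s,t}.\<close>
definition pers_module ::
  "('k::field \<Rightarrow> 'v::ab_group_add \<Rightarrow> 'v) \<Rightarrow> (real^'n \<Rightarrow> 'v set)
     \<Rightarrow> (real^'n \<Rightarrow> real^'n \<Rightarrow> 'v \<Rightarrow> 'v) \<Rightarrow> bool" where
  "pers_module sc V F \<longleftrightarrow>
     vector_space sc \<and>
     (\<forall>s. module.subspace sc (V s)) \<and>
     (\<forall>s t. cw_le s t \<longrightarrow> lin_on sc sc (V s) (V t) (F s t)) \<and>
     (\<forall>s. \<forall>x\<in>V s. F s s x = x) \<and>
     (\<forall>s t u. cw_le s t \<longrightarrow> cw_le t u \<longrightarrow> (\<forall>x\<in>V s. F t u (F s t x) = F s u x))"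

definition pers_hom ::
  "('k::field \<Rightarrow> 'a::ab_group_add \<Rightarrow> 'a) \<Rightarrow> (real^'n \<Rightarrow> 'a set) \<Rightarrow> (real^'n \<Rightarrow> real^'n \<Rightarrow> 'a \<Rightarrow> 'a)
   \<Rightarrow> ('k \<Rightarrow> 'b::ab_group_add \<Rightarrow> 'b) \<Rightarrow> (real^'n \<Rightarrow> 'b set) \<Rightarrow> (real^'n \<Rightarrow> real^'n \<Rightarrow> 'b \<Rightarrow> 'b)
   \<Rightarrow> (real^'n \<Rightarrow> 'a \<Rightarrow> 'b) \<Rightarrow> bool" where
  "pers_hom sa V F sb W G \<phi> \<longleftrightarrow>
     pers_module sa V F \<and> pers_module sb W G \<and>
     (\<forall>s. lin_on sa sb (V s) (W s) (\<phi> s)) \<and>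
     (\<forall>s t. cw_le s t \<longrightarrow> (\<forall>x\<in>V s. \<phi> t (F s t x) = G s t (\<phi> s x)))"

text \<open>Short exact sequence 0 \<rightarrow> V' \<rightarrow> V \<rightarrow> V'' \<rightarrow> 0 in Pers_n
  (exactness in a functor category into Vect_k is pointwise).\<close>
definition short_exact ::
  "('k::field \<Rightarrow> 'a::ab_group_add \<Rightarrow> 'a) \<Rightarrow> (real^'n \<Rightarrow> 'a set) \<Rightarrow> (real^'n \<Rightarrow> real^'n \<Rightarrow> 'a \<Rightarrow> 'a)
   \<Rightarrow> ('k \<Rightarrow> 'b::ab_group_add \<Rightarrow> 'b) \<Rightarrow> (real^'n \<Rightarrow> 'b set) \<Rightarrow> (real^'n \<Rightarrow> real^'n \<Rightarrow> 'b \<Rightarrow> 'b)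
   \<Rightarrow> ('k \<Rightarrow> 'c::ab_group_add \<Rightarrow> 'c) \<Rightarrow> (real^'n \<Rightarrow> 'c set) \<Rightarrow> (real^'n \<Rightarrow> real^'n \<Rightarrow> 'c \<Rightarrow> 'c)
   \<Rightarrow> (real^'n \<Rightarrow> 'a \<Rightarrow> 'b) \<Rightarrow> (real^'n \<Rightarrow> 'b \<Rightarrow> 'c) \<Rightarrow> bool" where
  "short_exact sa V1 F1 sb V F sc V2 F2 \<phi> \<psi> \<longleftrightarrow>
     pers_hom sa V1 F1 sb V F \<phi> \<and> pers_hom sb V F sc V2 F2 \<psi> \<and>
     (\<forall>s. inj_on (\<phi> s) (V1 s)) \<and>
     (\<forall>s. \<phi> s ` V1 s = {x \<in> V s. \<psi> s x = 0}) \<and>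
     (\<forall>s. \<psi> s ` V s = V2 s)"

definition ephemeral :: "(real^'n \<Rightarrow> 'v set) \<Rightarrow> (real^'n \<Rightarrow> real^'n \<Rightarrow> 'v \<Rightarrow> 'v::zero) \<Rightarrow> bool" where
  "ephemeral V F \<longleftrightarrow> (\<forall>s eps. eps > 0 \<longrightarrow> (\<forall>x\<in>V (shift_down s eps). F (shift_down s eps) s x = 0))"

end

theory Submission
  imports Defs
begin

lemma sub0:
  assumes "vector_space sc" "module.subspace sc S"
  shows "0 \<in> S"
proof -
  interpret vector_space sc by (rule assms(1))
  show ?thesis using assms(2) by (rule subspace_0)
qed

lemma lin0:
  fixes g :: "'a::ab_group_add \<Rightarrow> 'b::ab_group_add"
  assumes "lin_on sa sb A B g" "0 \<in> A"
  shows "g 0 = 0"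
proof -
  have "g (0 + 0) = g 0 + g 0" using assms unfolding lin_on_def by blast
  then show ?thesis by simp
qed

lemma cw_refl: "cw_le s s" by (simp add: cw_le_def)

lemma cw_shift: "eps \<ge> 0 \<Longrightarrow> cw_le (shift_down s eps) s"
  by (simp add: cw_le_def shift_down_def)

lemma shift_shift: "shift_down (shift_down s a) b = shift_down s (a + b)"
  by (simp add: shift_down_def vec_eq_iff)

theorem lemma2p5:
  fixes sa :: "'k::field \<Rightarrow> 'a::ab_group_add \<Rightarrow> 'a"
    and sb :: "'k \<Rightarrow> 'b::ab_group_add \<Rightarrow> 'b"
    and sc :: "'k \<Rightarrow> 'c::ab_group_add \<Rightarrow> 'c"
    and V1 :: "real^'n \<Rightarrow> 'a set" and F1 :: "real^'n \<Rightarrow> real^'n \<Rightarrow> 'a \<Rightarrow> 'a"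
    and V :: "real^'n \<Rightarrow> 'b set" and F :: "real^'n \<Rightarrow> real^'n \<Rightarrow> 'b \<Rightarrow> 'b"
    and V2 :: "real^'n \<Rightarrow> 'c set" and F2 :: "real^'n \<Rightarrow> real^'n \<Rightarrow> 'c \<Rightarrow> 'c"
    and \<phi> :: "real^'n \<Rightarrow> 'a \<Rightarrow> 'b" and \<psi> :: "real^'n \<Rightarrow> 'b \<Rightarrow> 'c"
  assumes "short_exact sa V1 F1 sb V F sc V2 F2 \<phi> \<psi>"
  shows "ephemeral V F \<longleftrightarrow> (ephemeral V1 F1 \<and> ephemeral V2 F2)"
proof -
  have H1: "pers_hom sa V1 F1 sb V F \<phi>" and H2: "pers_hom sb V F sc V2 F2 \<psi>"
   and inj: "\<And>s. inj_on (\<phi> s) (V1 s)"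
   and ker: "\<And>s. \<phi> s ` V1 s = {x \<in> V s. \<psi> s x = 0}"
   and surj: "\<And>s. \<psi> s ` V s = V2 s"
    using assms unfolding short_exact_def by blast+
  have M1: "pers_module sa V1 F1" and M: "pers_module sb V F"
   and phl: "\<And>s. lin_on sa sb (V1 s) (V s) (\<phi> s)"
   and phn: "\<And>s t x. cw_le s t \<Longrightarrow> x \<in> V1 s \<Longrightarrow> \<phi> t (F1 s t x) = F s t (\<phi> s x)"
    using H1 unfolding pers_hom_def by blast+
  have psl: "\<And>s. lin_on sb sc (V s) (V2 s) (\<psi> s)"
   and psn: "\<And>s t x. cw_le s t \<Longrightarrow> x \<in> V s \<Longrightarrow> \<psi> t (F s t x) = F2 s t (\<psi> s x)"
    using H2 unfolding pers_hom_def by blast+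
  have z1: "\<And>s. 0 \<in> V1 s" using M1 sub0 unfolding pers_module_def by blast
  have z: "\<And>s. 0 \<in> V s" using M sub0 unfolding pers_module_def by blast
  have ph0: "\<And>s. \<phi> s 0 = 0" using lin0[OF phl z1] .
  have ps0: "\<And>s. \<psi> s 0 = 0" using lin0[OF psl z] .
  have phin: "\<And>s x. x \<in> V1 s \<Longrightarrow> \<phi> s x \<in> V s" using phl unfolding lin_on_def by blast
  have F1in: "\<And>s t x. cw_le s t \<Longrightarrow> x \<in> V1 s \<Longrightarrow> F1 s t x \<in> V1 t"
    using M1 unfolding pers_module_def lin_on_def by blast
  have Fin: "\<And>s t x. cw_le s t \<Longrightarrow> x \<in> V s \<Longrightarrow> F s t x \<in> V t"
    using M unfolding pers_module_def lin_on_def by blast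
  have Fcomp: "\<And>s t u x. cw_le s t \<Longrightarrow> cw_le t u \<Longrightarrow> x \<in> V s \<Longrightarrow> F t u (F s t x) = F s u x"
    using M unfolding pers_module_def by blast
  show ?thesis
  proof
    assume E: "ephemeral V F"
    have "ephemeral V1 F1"
      unfolding ephemeral_def
    proof (intro allI impI ballI)
      fix s :: "real^'n" and eps :: real and x assume e: "eps > 0" and x: "x \<in> V1 (shift_down s eps)"
      have c: "cw_le (shift_down s eps) s" by (rule cw_shift) (use e in simp)
      have "\<phi> s (F1 (shift_down s eps) s x) = 0"
        using phn[OF c x] E e phin[OF x] unfolding ephemeral_def by simp
      moreover have "\<phi> s 0 = 0" by (rule ph0)
      ultimately have "\<phi> s (F1 (shift_down s eps) s x) = \<phi> s 0" by simp
      then show "F1 (shift_down s eps) s x = 0"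
        by (rule inj_onD[OF inj[of s]]) (rule F1in[OF c x], rule z1)
    qed
    moreover have "ephemeral V2 F2"
      unfolding ephemeral_def
    proof (intro allI impI ballI)
      fix s :: "real^'n" and eps :: real and y assume e: "eps > 0" and y: "y \<in> V2 (shift_down s eps)"
      have c: "cw_le (shift_down s eps) s" by (rule cw_shift) (use e in simp)
      obtain x where x: "x \<in> V (shift_down s eps)" and yx: "y = \<psi> (shift_down s eps) x"
        using y surj[of "shift_down s eps"] by blast
      show "F2 (shift_down s eps) s y = 0"
        using psn[OF c x] E e x yx ps0 unfolding ephemeral_def by simp
    qed
    ultimately show "ephemeral V1 F1 \<and> ephemeral V2 F2" by blast
  next
    assume E: "ephemeral V1 F1 \<and> ephemeral V2 F2"
    show "ephemeral V F"
      unfolding ephemeral_def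
    proof (intro allI impI ballI)
      fix s :: "real^'n" and eps :: real and x assume e: "eps > 0" and x: "x \<in> V (shift_down s eps)"
      define s' where "s' = shift_down s (eps/2)"
      have sd: "shift_down s eps = shift_down s' (eps/2)"
        unfolding s'_def shift_shift by simp
      have c1: "cw_le (shift_down s eps) s'" using sd cw_shift[of "eps/2" s'] e by simp
      have c2: "cw_le s' s" unfolding s'_def by (rule cw_shift) (use e in simp)
      have c3: "cw_le (shift_down s eps) s" by (rule cw_shift) (use e in simp)
      have "\<psi> s' (F (shift_down s eps) s' x) = F2 (shift_down s eps) s' (\<psi> (shift_down s eps) x)"
        using psn[OF c1 x] .
      also have "\<dots> = 0"
      proof -
        have yin: "\<psi> (shift_down s eps) x \<in> V2 (shift_down s' (eps/2))"
          using surj[of "shift_down s eps"] x unfolding sd[symmetric] by blast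
        have "ephemeral V2 F2" using E by blast
        then have "F2 (shift_down s' (eps/2)) s' (\<psi> (shift_down s eps) x) = 0"
          unfolding ephemeral_def using yin e by simp
        then show ?thesis using sd by simp
      qed
      finally have "F (shift_down s eps) s' x \<in> \<phi> s' ` V1 s'"
        using ker[of s'] Fin[OF c1 x] by blast
      then obtain y where y: "y \<in> V1 s'" and yx: "F (shift_down s eps) s' x = \<phi> s' y" by blast
      have "F (shift_down s eps) s x = F s' s (\<phi> s' y)"
        using Fcomp[OF c1 c2 x] yx by simp
      also have "\<dots> = \<phi> s (F1 s' s y)" using phn[OF c2 y] by simp
      also have "F1 s' s y = 0" using E y e unfolding ephemeral_def s'_def by simp
      finally show "F (shift_down s eps) s x = 0" using ph0 by simp
    qed
  qed
qed

end
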